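(* For every semiframe $(X,\le,\ast)$, the semitopology $\mathrm{St}(X,\le,\ast)$ is sober.
   Context: A semiframe is a triple $(X,\le,\ast)$ where $(X,\le)$ is a complete join-semilattice and $\ast\subseteq X\times X$ is commutative, satisfies $x\ast x$ for every $x\neq\bot_X=\bigvee\varnothing$, and $x\ast\bigvee Y$ iff $x\ast y$ for some $y\in Y$. An abstract point is a nonempty, up-closed subset $F\subseteq X$ with $y\ast y'$ for all $y,y'\in F$ that is completely prime ($\bigvee Y\in F$ implies $y\in F$ for some $y\in Y$, for every $Y\subseteq X$ including $\varnothing$). $\mathrm{Op}(x)$ is the set of abstract points containing $x$. $\mathrm{St}(X,\le,\ast)$ is the semitopology whose points are the abstract points and whose open sets are the sets $\mathrm{Op}(x)$, $x\in X$. A semitopology is a set $\mathsf P$ with $\mathcal O\subseteq\mathcal P(\mathsf P)$ containing $\varnothing,\mathsf P$ and closed under arbitrary unions; $(\mathcal O,\subseteq,\between)$ (with $O\between O'$ iff $O\cap O'\neq\varnothing$) is a semiframe. $(\mathsf P,\mathcal O)$ is sober when the map $p\mapsto\mathrm{nbhd}(p)=\{O\in\mathcal O\mid p\in O\}$ is a bijection from $\mathsf P$ onto the set of abstract points of $(\mathcal O,\subseteq,\between)$. *)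

theory Defs
  imports Main
begin

definition abstract_point_on ::
  "'a set \<Rightarrow> ('a \<Rightarrow> 'a \<Rightarrow> bool) \<Rightarrow> ('a set \<Rightarrow> 'a) \<Rightarrow> ('a \<Rightarrow> 'a \<Rightarrow> bool) \<Rightarrow> 'a set \<Rightarrow> bool" where
  "abstract_point_on X le join ast F \<longleftrightarrow>
     F \<noteq> {} \<and> F \<subseteq> X \<and>
     (\<forall>x\<in>F. \<forall>y\<in>X. le x y \<longrightarrow> y \<in> F) \<and>
     (\<forall>y\<in>F. \<forall>y'\<in>F. ast y y') \<and>
     (\<forall>Y. Y \<subseteq> X \<longrightarrow> join Y \<in> F \<longrightarrow> (\<exists>y\<in>Y. y \<in> F))"

definition semiframe :: "('a::complete_lattice \<Rightarrow> 'a \<Rightarrow> bool) \<Rightarrow> bool" where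
  "semiframe ast \<longleftrightarrow>
     (\<forall>x y. ast x y \<longleftrightarrow> ast y x) \<and>
     (\<forall>x. x \<noteq> bot \<longrightarrow> ast x x) \<and>
     (\<forall>x Y. ast x (Sup Y) \<longleftrightarrow> (\<exists>y\<in>Y. ast x y))"

definition abstract_point :: "('a::complete_lattice \<Rightarrow> 'a \<Rightarrow> bool) \<Rightarrow> 'a set \<Rightarrow> bool" where
  "abstract_point ast F \<longleftrightarrow> abstract_point_on UNIV (\<le>) Sup ast F"

definition Op :: "('a::complete_lattice \<Rightarrow> 'a \<Rightarrow> bool) \<Rightarrow> 'a \<Rightarrow> 'a set set" where
  "Op ast x = {F. abstract_point ast F \<and> x \<in> F}"

definition St_points :: "('a::complete_lattice \<Rightarrow> 'a \<Rightarrow> bool) \<Rightarrow> 'a set set" where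
  "St_points ast = {F. abstract_point ast F}"

definition St_opens :: "('a::complete_lattice \<Rightarrow> 'a \<Rightarrow> bool) \<Rightarrow> 'a set set set" where
  "St_opens ast = range (Op ast)"

definition semitopology :: "'p set \<Rightarrow> 'p set set \<Rightarrow> bool" where
  "semitopology P Opn \<longleftrightarrow> Opn \<subseteq> Pow P \<and> {} \<in> Opn \<and> P \<in> Opn \<and> (\<forall>S. S \<subseteq> Opn \<longrightarrow> \<Union>S \<in> Opn)"

definition nbhd :: "'p set set \<Rightarrow> 'p \<Rightarrow> 'p set set" where
  "nbhd Opn p = {A \<in> Opn. p \<in> A}"

definition sober :: "'p set \<Rightarrow> 'p set set \<Rightarrow> bool" where
  "sober P Opn \<longleftrightarrow>
     bij_betw (nbhd Opn) P
       {F. abstract_point_on Opn (\<subseteq>) Union (\<lambda>A B. A \<inter> B \<noteq> {}) F}"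

end

theory Submission
  imports Defs
begin

lemma ap_simp: "abstract_point ast F \<longleftrightarrow>
   F \<noteq> {} \<and> (\<forall>x\<in>F. \<forall>y. x \<le> y \<longrightarrow> y \<in> F) \<and> (\<forall>y\<in>F. \<forall>y'\<in>F. ast y y') \<and>
   (\<forall>Y. Sup Y \<in> F \<longrightarrow> (\<exists>y\<in>Y. y \<in> F))"
  unfolding abstract_point_def abstract_point_on_def by auto

lemma Op_Sup: "Op ast (Sup Y) = \<Union> (Op ast ` Y)"
  unfolding Op_def ap_simp by (auto intro: Sup_upper)

lemma Op_mono: "x \<le> y \<Longrightarrow> Op ast x \<subseteq> Op ast y"
  unfolding Op_def ap_simp by auto

lemma Op_meet: "Op ast x \<inter> Op ast y \<noteq> {} \<Longrightarrow> ast x y"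
  unfolding Op_def ap_simp by auto

theorem proposition7p15:
  fixes ast :: "'a::complete_lattice \<Rightarrow> 'a \<Rightarrow> bool"
  assumes "semiframe ast"
  shows "sober (St_points ast) (St_opens ast)"
  unfolding sober_def bij_betw_def
proof (intro conjI)
  show "inj_on (nbhd (St_opens ast)) (St_points ast)"
  proof (rule inj_onI)
    fix F G assume F: "F \<in> St_points ast" and G: "G \<in> St_points ast"
      and e: "nbhd (St_opens ast) F = nbhd (St_opens ast) G"
    have "x \<in> F \<longleftrightarrow> x \<in> G" for x
    proof -
      have "x \<in> F \<longleftrightarrow> Op ast x \<in> nbhd (St_opens ast) F"
        using F unfolding nbhd_def St_opens_def Op_def St_points_def by auto
      moreover have "x \<in> G \<longleftrightarrow> Op ast x \<in> nbhd (St_opens ast) G"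
        using G unfolding nbhd_def St_opens_def Op_def St_points_def by auto
      ultimately show ?thesis using e by simp
    qed
    then show "F = G" by auto
  qed
next
  let ?T = "{F. abstract_point_on (St_opens ast) (\<subseteq>) Union (\<lambda>A B. A \<inter> B \<noteq> {}) F}"
  show "nbhd (St_opens ast) ` St_points ast = ?T"
  proof
    show "nbhd (St_opens ast) ` St_points ast \<subseteq> ?T"
    proof
      fix N assume "N \<in> nbhd (St_opens ast) ` St_points ast"
      then obtain F where F: "abstract_point ast F" and N: "N = nbhd (St_opens ast) F"
        unfolding St_points_def by auto
      obtain x where "x \<in> F" using F unfolding ap_simp by auto
      hence "Op ast x \<in> N" using F unfolding N nbhd_def St_opens_def Op_def by auto
      hence "N \<noteq> {}" by auto
      moreover have "N \<subseteq> St_opens ast" unfolding N nbhd_def by auto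
      moreover have "\<forall>A\<in>N. \<forall>B\<in>St_opens ast. A \<subseteq> B \<longrightarrow> B \<in> N"
        unfolding N nbhd_def by auto
      moreover have "\<forall>A\<in>N. \<forall>B\<in>N. A \<inter> B \<noteq> {}"
        unfolding N nbhd_def by auto
      moreover have "\<forall>Y. Y \<subseteq> St_opens ast \<longrightarrow> \<Union>Y \<in> N \<longrightarrow> (\<exists>y\<in>Y. y \<in> N)"
        unfolding N nbhd_def by auto
      ultimately show "N \<in> ?T" unfolding abstract_point_on_def by simp
    qed
  next
    show "?T \<subseteq> nbhd (St_opens ast) ` St_points ast"
    proof
      fix P assume "P \<in> ?T"
      hence P: "P \<noteq> {}" "P \<subseteq> St_opens ast"
        "\<And>A B. A \<in> P \<Longrightarrow> B \<in> St_opens ast \<Longrightarrow> A \<subseteq> B \<Longrightarrow> B \<in> P"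
        "\<And>A B. A \<in> P \<Longrightarrow> B \<in> P \<Longrightarrow> A \<inter> B \<noteq> {}"
        "\<And>Y. Y \<subseteq> St_opens ast \<Longrightarrow> \<Union>Y \<in> P \<Longrightarrow> \<exists>y\<in>Y. y \<in> P"
        unfolding abstract_point_on_def by auto
      define F where "F = {x. Op ast x \<in> P}"
      have opn: "Op ast x \<in> St_opens ast" for x unfolding St_opens_def by auto
      have FA: "abstract_point ast F"
        unfolding ap_simp
      proof (intro conjI ballI allI impI)
        obtain A where "A \<in> P" using P(1) by auto
        then obtain x where "Op ast x \<in> P" using P(2) unfolding St_opens_def by auto
        then show "F \<noteq> {}" unfolding F_def by auto
      next
        fix x y assume "x \<in> F" "x \<le> y"
        then show "y \<in> F" unfolding F_def using P(3) Op_mono opn by blast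
      next
        fix x y assume "x \<in> F" "y \<in> F"
        then show "ast x y" unfolding F_def using P(4) Op_meet by blast
      next
        fix Y :: "'a set" assume "Sup Y \<in> F"
        hence "\<Union>(Op ast ` Y) \<in> P" unfolding F_def using Op_Sup[of ast Y] by simp
        moreover have "Op ast ` Y \<subseteq> St_opens ast" using opn by auto
        ultimately obtain y where "y \<in> Y" "Op ast y \<in> P" using P(5) by blast
        then show "\<exists>y\<in>Y. y \<in> F" unfolding F_def by auto
      qed
      have "nbhd (St_opens ast) F = P"
      proof
        show "nbhd (St_opens ast) F \<subseteq> P"
        proof
          fix A assume "A \<in> nbhd (St_opens ast) F"
          then obtain x where "A = Op ast x" "F \<in> Op ast x"
            unfolding nbhd_def St_opens_def by auto
          then show "A \<in> P" unfolding Op_def F_def by auto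
        qed
      next
        show "P \<subseteq> nbhd (St_opens ast) F"
        proof
          fix A assume A: "A \<in> P"
          then obtain x where x: "A = Op ast x" using P(2) unfolding St_opens_def by auto
          hence "x \<in> F" using A unfolding F_def by auto
          then show "A \<in> nbhd (St_opens ast) F"
            using FA x opn unfolding nbhd_def Op_def by auto
        qed
      qed
      then show "P \<in> nbhd (St_opens ast) ` St_points ast"
        using FA unfolding St_points_def by auto
    qed
  qed
qed

end
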